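(* Let $f:\mathbb{R}^d\to\mathbb{R}$ be differentiable with $f^*:=\sup_{\theta} f(\theta)<\infty$. Assume (i) $f$ is $L$-smooth; (ii) $f$ satisfies the non-uniform Łojasiewicz condition with degree $\xi=0$, i.e. there is a function $C:\mathbb{R}^d\to(0,\infty)$ with $\|\nabla f(\theta)\|_2\ge C(\theta)\,|f^*-f(\theta)|$ for all $\theta$. Fix $h\in(0,1)$ and $\eta_{\max}>0$, and run $\theta_{t+1}=\theta_t+\eta_t\nabla f(\theta_t)$ for $t=1,2,\dots$, where $\eta_t$ is chosen by backtracking Armijo line-search, i.e. $\eta_t$ is the largest step-size in $(0,\eta_{\max}]$ satisfying $$f(\theta_t+\eta_t\nabla f(\theta_t))\ge f(\theta_t)+h\,\eta_t\,\|\nabla f(\theta_t)\|_2^2 .$$ Assume (iii) $\mu:=\inf_{t\ge 1}[C(\theta_t)]^2>0$. Then for every $T\ge 1$, $$f^*-f(\theta_{T+1})\le \max\Big\{\frac{L}{2h(1-h)},\ \frac{1}{h\,\eta_{\max}}\Big\}\frac{1}{\mu\, T}.$$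
   Context: $f$ is $L$-smooth means $|f(\theta)-f(\theta')-\langle\nabla f(\theta'),\theta-\theta'\rangle|\le \frac{L}{2}\|\theta-\theta'\|_2^2$ for all $\theta,\theta'$. (In the paper $f$ is the policy-gradient objective of a softmax policy, e.g. $f(\theta)=\langle\pi_\theta,r\rangle$ for bandits or $f(\theta)=V^{\pi_\theta}(\rho)$ for tabular MDPs, but the result is stated for an abstract $f$ with these properties.) *)

theory Defs
  imports "HOL-Analysis.Analysis"
begin

end

theory Submission
  imports Defs
begin

theorem theorem1:
  fixes f :: "real^'d \<Rightarrow> real"
    and grad :: "real^'d \<Rightarrow> real^'d"
    and C :: "real^'d \<Rightarrow> real"
    and L h eta_max :: real
    and theta :: "nat \<Rightarrow> real^'d"
    and eta :: "nat \<Rightarrow> real"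
    and T :: nat
  assumes grad: "\<And>x. GDERIV f x :> grad x"
    and bdd: "bdd_above (range f)"
    and smooth: "\<And>x y. \<bar>f x - f y - inner (grad y) (x - y)\<bar> \<le> L / 2 * (norm (x - y))\<^sup>2"
    and C_pos: "\<And>x. C x > 0"
    and loj: "\<And>x. norm (grad x) \<ge> C x * \<bar>Sup (range f) - f x\<bar>"
    and h: "0 < h" "h < 1"
    and eta_max: "eta_max > 0"
    and iter: "\<And>t. t \<ge> 1 \<Longrightarrow> theta (t + 1) = theta t + eta t *\<^sub>R grad (theta t)"
    and armijo_mem: "\<And>t. t \<ge> 1 \<Longrightarrow> 0 < eta t \<and> eta t \<le> eta_max \<and>
        f (theta t + eta t *\<^sub>R grad (theta t)) \<ge> f (theta t) + h * eta t * (norm (grad (theta t)))\<^sup>2"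
    and armijo_max: "\<And>t e. t \<ge> 1 \<Longrightarrow> 0 < e \<Longrightarrow> e \<le> eta_max \<Longrightarrow>
        f (theta t + e *\<^sub>R grad (theta t)) \<ge> f (theta t) + h * e * (norm (grad (theta t)))\<^sup>2 \<Longrightarrow> e \<le> eta t"
    and mu_pos: "(INF t\<in>{1..}. (C (theta t))\<^sup>2) > 0"
    and T: "T \<ge> 1"
  shows "Sup (range f) - f (theta (T + 1))
    \<le> max (L / (2 * h * (1 - h))) (1 / (h * eta_max)) * (1 / ((INF t\<in>{1..}. (C (theta t))\<^sup>2) * real T))"
proof -
  define S where "S = Sup (range f)"
  define mu where "mu = (INF t\<in>{1..}. (C (theta t))\<^sup>2)"
  define M where "M = max (L / (2 * h * (1 - h))) (1 / (h * eta_max))"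
  define d where "d t = S - f (theta t)" for t
  define a where "a = mu / M"
  have Mpos: "M > 0"
  proof -
    have "1 / (h * eta_max) > 0" using h eta_max by simp
    thus ?thesis unfolding M_def by (meson less_le_trans max.cobounded2)
  qed
  have mupos: "mu > 0" using mu_pos mu_def by simp
  have apos: "a > 0" using Mpos mupos a_def by simp
  define e0 where "e0 = 1 / (h * M)"
  have e0pos: "e0 > 0" using h Mpos e0_def by simp
  have e0max: "e0 \<le> eta_max"
  proof -
    have "1 / (h * eta_max) \<le> M" unfolding M_def by simp
    hence "1 \<le> M * (h * eta_max)" using h eta_max by (simp add: field_simps)
    thus ?thesis unfolding e0_def using h Mpos by (simp add: field_simps)
  qed
  have e0L: "L * e0 \<le> 2 * (1 - h)"
  proof -
    have "L / (2 * h * (1 - h)) \<le> M" unfolding M_def by simp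
    hence "L \<le> M * (2 * h * (1 - h))" using h by (simp add: field_simps)
    thus ?thesis unfolding e0_def using h Mpos by (simp add: field_simps)
  qed
  have dnn: "d t \<ge> 0" for t
    unfolding d_def S_def using cSup_upper[OF _ bdd] by simp
  have muC: "mu \<le> (C (theta t))\<^sup>2" if "t \<ge> 1" for t
    unfolding mu_def
    by (rule cINF_lower) (use that in \<open>auto intro: bdd_belowI[where m=0]\<close>)
  have step: "d (t + 1) \<le> d t - a * (d t)\<^sup>2" if t: "t \<ge> 1" for t
  proof -
    let ?g = "grad (theta t)"
    let ?x = "theta t"
    have arm0: "f (?x + e0 *\<^sub>R ?g) \<ge> f ?x + h * e0 * (norm ?g)\<^sup>2"
    proof -
      have sm: "\<bar>f (?x + e0 *\<^sub>R ?g) - f ?x - inner ?g ((?x + e0 *\<^sub>R ?g) - ?x)\<bar>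
          \<le> L / 2 * (norm ((?x + e0 *\<^sub>R ?g) - ?x))\<^sup>2" by (rule smooth)
      have i: "inner ?g ((?x + e0 *\<^sub>R ?g) - ?x) = e0 * (norm ?g)\<^sup>2"
        by (simp add: power2_norm_eq_inner)
      have n: "(norm ((?x + e0 *\<^sub>R ?g) - ?x))\<^sup>2 = e0\<^sup>2 * (norm ?g)\<^sup>2"
        using e0pos by (simp add: power_mult_distrib)
      have "f (?x + e0 *\<^sub>R ?g) \<ge> f ?x + e0 * (norm ?g)\<^sup>2 - L / 2 * (e0\<^sup>2 * (norm ?g)\<^sup>2)"
        using sm unfolding i n abs_le_iff by linarith
      moreover have "L / 2 * (e0\<^sup>2 * (norm ?g)\<^sup>2) \<le> (1 - h) * e0 * (norm ?g)\<^sup>2"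
      proof -
        have "L * e0 * (e0 * (norm ?g)\<^sup>2) \<le> 2 * (1 - h) * (e0 * (norm ?g)\<^sup>2)"
          using e0L e0pos by (intro mult_right_mono) auto
        thus ?thesis by (simp add: power2_eq_square algebra_simps)
      qed
      ultimately show ?thesis by (simp add: algebra_simps)
    qed
    have "e0 \<le> eta t" using armijo_max[OF t e0pos e0max arm0] .
    have am: "f (theta (t+1)) \<ge> f ?x + h * eta t * (norm ?g)\<^sup>2"
      using armijo_mem[OF t] iter[OF t] by simp
    have "h * e0 * (norm ?g)\<^sup>2 \<le> h * eta t * (norm ?g)\<^sup>2"
      using \<open>e0 \<le> eta t\<close> h by (intro mult_right_mono) auto
    moreover have "h * e0 = 1 / M" unfolding e0_def using h by simp
    ultimately have p: "f (theta (t+1)) \<ge> f ?x + (norm ?g)\<^sup>2 / M" using am by simp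
    have g1: "norm ?g \<ge> C ?x * d t" using loj[of ?x] dnn[of t] unfolding d_def S_def by simp
    have "(norm ?g)\<^sup>2 \<ge> (C ?x * d t)\<^sup>2"
      using g1 C_pos[of ?x] dnn[of t] by (intro power_mono) auto
    also have "(C ?x * d t)\<^sup>2 = (C ?x)\<^sup>2 * (d t)\<^sup>2" by (simp add: power_mult_distrib)
    also have "\<dots> \<ge> mu * (d t)\<^sup>2" using muC[OF t] by (intro mult_right_mono) auto
    finally have "(norm ?g)\<^sup>2 / M \<ge> mu * (d t)\<^sup>2 / M" using Mpos by (simp add: divide_right_mono)
    hence "(norm ?g)\<^sup>2 / M \<ge> a * (d t)\<^sup>2" unfolding a_def by simp
    with p show ?thesis unfolding d_def by simp
  qed
  have rec: "d t > 0 \<and> 1 / d (t + 1) \<ge> 1 / d t + a" if t: "t \<ge> 1" and pos: "d (t+1) > 0" for t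
  proof -
    have s: "d (t + 1) \<le> d t - a * (d t)\<^sup>2" using step[OF t] .
    have "a * (d t)\<^sup>2 \<ge> 0" using apos by simp
    hence le: "d (t+1) \<le> d t" using s by simp
    hence dp: "d t > 0" using pos by simp
    have "1 / d (t + 1) - 1 / d t = (d t - d (t+1)) / (d t * d (t+1))"
      using dp pos by (simp add: field_simps)
    also have "\<dots> \<ge> a * (d t)\<^sup>2 / (d t * d (t+1))"
      using s dp pos by (intro divide_right_mono) auto
    also have "a * (d t)\<^sup>2 / (d t * d (t+1)) = a * (d t / d (t+1))"
      using dp by (simp add: power2_eq_square)
    also have "a * (d t / d (t+1)) \<ge> a * 1"
      using le pos apos by (intro mult_left_mono) auto
    finally show ?thesis using dp by simp
  qed
  have ind: "d (n + 1) > 0 \<longrightarrow> 1 / d (n + 1) \<ge> a * n" for n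
  proof (induction n)
    case 0
    then show ?case by simp
  next
    case (Suc n)
    show ?case
    proof
      assume "d (Suc n + 1) > 0"
      from rec[of "n+1"] this have "d (n+1) > 0 \<and> 1 / d (n + 2) \<ge> 1 / d (n+1) + a" by simp
      with Suc show "1 / d (Suc n + 1) \<ge> a * Suc n" by (simp add: algebra_simps)
    qed
  qed
  have Tpos: "real T > 0" using T by simp
  have goal: "d (T + 1) \<le> 1 / (a * T)"
  proof (cases "d (T + 1) > 0")
    case True
    hence "1 / d (T + 1) \<ge> a * T" using ind by blast
    hence "1 / (1 / d (T + 1)) \<le> 1 / (a * T)"
      using apos Tpos True by (intro divide_left_mono) auto
    thus ?thesis by simp
  next
    case False
    thus ?thesis using apos Tpos dnn[of "T+1"] by simp
  qed
  have "1 / (a * T) = M * (1 / (mu * T))" unfolding a_def using Mpos mupos by simp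
  with goal show ?thesis unfolding d_def S_def M_def mu_def by simp
qed

end
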